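(* Let $X$ be a Banach lattice, $S$ a convex $C_0$-semigroup on $X$, $T>0$ and $x_0\in X$. Then there exist $L\ge0$ and $r>0$ such that $\sup_{t\in[0,T]}\|S(t)y-S(t)z\|\le L\|y-z\|$ for all $y,z\in X$ with $\|y-x_0\|\le r$ and $\|z-x_0\|\le r$.
   Context: An operator $T\colon X\to X$ is convex if $T(\lambda x+(1-\lambda)y)\le\lambda Tx+(1-\lambda)Ty$ for all $x,y\in X$, $\lambda\in[0,1]$, and bounded if $\sup_{\|x\|\le r}\|Tx\|<\infty$ for all $r>0$. A convex $C_0$-semigroup is a family $(S(t))_{t\ge0}$ of bounded convex operators $X\to X$ with $S(0)=\mathrm{id}$, $S(t+s)=S(t)S(s)$ for all $s,t\ge0$, and $S(t)x\to x$ as $t\downarrow0$ for all $x$. *)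

theory Defs
  imports "HOL-Analysis.Analysis"
begin

class banach_lattice = banach + lattice +
  assumes add_left_mono_bl: "x \<le> y \<Longrightarrow> x + z \<le> y + z"
  and scaleR_mono_bl: "x \<le> y \<Longrightarrow> 0 \<le> c \<Longrightarrow> c *\<^sub>R x \<le> c *\<^sub>R y"
  and lattice_norm: "sup x (- x) \<le> sup y (- y) \<Longrightarrow> norm x \<le> norm y"

definition convex_op :: "('a::banach_lattice \<Rightarrow> 'a) \<Rightarrow> bool" where
  "convex_op T \<longleftrightarrow> (\<forall>x y. \<forall>a::real. 0 \<le> a \<and> a \<le> 1 \<longrightarrow>
      T (a *\<^sub>R x + (1 - a) *\<^sub>R y) \<le> a *\<^sub>R T x + (1 - a) *\<^sub>R T y)"

definition bounded_op :: "('a::real_normed_vector \<Rightarrow> 'b::real_normed_vector) \<Rightarrow> bool" where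
  "bounded_op T \<longleftrightarrow> (\<forall>r>0. \<exists>M. \<forall>x. norm x \<le> r \<longrightarrow> norm (T x) \<le> M)"

text \<open>A convex C0-semigroup; S t is only relevant for t \<ge> 0.\<close>
definition convex_C0_semigroup :: "(real \<Rightarrow> 'a::banach_lattice \<Rightarrow> 'a) \<Rightarrow> bool" where
  "convex_C0_semigroup S \<longleftrightarrow>
     (\<forall>t\<ge>0. convex_op (S t) \<and> bounded_op (S t)) \<and>
     S 0 = id \<and>
     (\<forall>s\<ge>0. \<forall>t\<ge>0. S (t + s) = S t \<circ> S s) \<and>
     (\<forall>x. ((\<lambda>t. S t x) \<longlongrightarrow> x) (at_right 0))"

end

theory Submission
  imports Defs
begin


lemma bl_add_mono_r: "(x::'a::banach_lattice) \<le> y \<Longrightarrow> z + x \<le> z + y"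
  using add_left_mono_bl[of x y z] by (simp add: add.commute)

lemma bl_neg_mono: "(x::'a::banach_lattice) \<le> y \<Longrightarrow> - y \<le> - x"
proof -
  assume "x \<le> y"
  then have "x + (- x - y) \<le> y + (- x - y)" by (rule add_left_mono_bl)
  moreover have "x + (- x - y) = - y" "y + (- x - y) = - x" by (simp_all add: algebra_simps)
  ultimately show ?thesis by simp
qed

lemma bl_sub_mono: "(x::'a::banach_lattice) \<le> y \<Longrightarrow> x - z \<le> y - z"
  using add_left_mono_bl[of x y "-z"] by simp

lemma bl_abs_ge: "(x::'a::banach_lattice) \<le> sup x (-x)" "-x \<le> sup x (-x)"
  by simp_all

lemma bl_abs_nonneg: "0 \<le> sup (x::'a::banach_lattice) (-x)"
proof -
  let ?a = "sup x (-x)"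
  have "x + -x \<le> ?a + -x" by (rule add_left_mono_bl) simp
  also have "\<dots> \<le> ?a + ?a" by (rule bl_add_mono_r) simp
  finally have "0 \<le> ?a + ?a" by simp
  then have "(1/2) *\<^sub>R 0 \<le> (1/2) *\<^sub>R (?a + ?a)" by (rule scaleR_mono_bl) simp
  moreover have "(1/2) *\<^sub>R (?a + ?a) = ?a"
  proof -
    have "(1/2) *\<^sub>R (?a + ?a) = (1/2) *\<^sub>R ?a + (1/2) *\<^sub>R ?a" by (rule scaleR_right_distrib)
    also have "\<dots> = (1/2 + 1/2) *\<^sub>R ?a" by (rule scaleR_add_left[symmetric])
    finally show ?thesis by simp
  qed
  ultimately show ?thesis by simp
qed

lemma bl_le_add_nonneg: "(x::'a::banach_lattice) \<le> y \<Longrightarrow> 0 \<le> c \<Longrightarrow> x \<le> y + c"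
proof -
  assume a: "x \<le> y" "0 \<le> c"
  have "y + 0 \<le> y + c" by (rule bl_add_mono_r) (rule a(2))
  then show ?thesis using a(1) by simp
qed

lemma bl_norm_abs: "norm (sup (x::'a::banach_lattice) (-x)) \<le> norm x"
proof (rule lattice_norm)
  let ?a = "sup x (-x)"
  have "- ?a \<le> 0" using bl_neg_mono[OF bl_abs_nonneg[of x]] by simp
  also have "0 \<le> ?a" by (rule bl_abs_nonneg)
  finally show "sup ?a (- ?a) \<le> ?a" by simp
qed

lemma bl_sandwich: "(u::'a::banach_lattice) \<le> v \<Longrightarrow> v \<le> w \<Longrightarrow> norm v \<le> norm u + norm w"
proof -
  assume uv: "u \<le> v" and vw: "v \<le> w"
  let ?p = "sup w (-w) + sup u (-u)"
  have p1: "v \<le> ?p"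
    using order_trans[OF vw bl_abs_ge(1)[of w]] bl_abs_nonneg[of u] by (rule bl_le_add_nonneg)
  have "-v \<le> sup u (-u) + sup w (-w)"
    using order_trans[OF bl_neg_mono[OF uv] bl_abs_ge(2)[of u]] bl_abs_nonneg[of w] by (rule bl_le_add_nonneg)
  then have p2: "-v \<le> ?p" by (simp add: add.commute)
  have "norm v \<le> norm ?p"
  proof (rule lattice_norm)
    have "?p \<le> sup ?p (-?p)" by simp
    then show "sup v (-v) \<le> sup ?p (-?p)" using p1 p2 by (meson le_sup_iff order_trans)
  qed
  also have "\<dots> \<le> norm (sup w (-w)) + norm (sup u (-u))" by (rule norm_triangle_ineq)
  also have "\<dots> \<le> norm w + norm u" using bl_norm_abs[of w] bl_norm_abs[of u] by simp
  finally show ?thesis by simp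
qed


lemma convex_half_step:
  fixes F :: "'a::banach_lattice \<Rightarrow> 'a"
  assumes cv: "convex_op F" and a: "0 < a" "a \<le> 1"
  shows "F (y + a *\<^sub>R h) - F y \<le> a *\<^sub>R (F (y + h) - F y)"
proof -
  have eq: "y + a *\<^sub>R h = a *\<^sub>R (y + h) + (1 - a) *\<^sub>R y"
    by (simp add: algebra_simps)
  have "F (y + a *\<^sub>R h) \<le> a *\<^sub>R F (y + h) + (1 - a) *\<^sub>R F y"
    using cv a unfolding convex_op_def eq by auto
  then have "F (y + a *\<^sub>R h) - F y \<le> a *\<^sub>R F (y + h) + (1 - a) *\<^sub>R F y - F y"
    by (rule bl_sub_mono)
  also have "a *\<^sub>R F (y + h) + (1 - a) *\<^sub>R F y - F y = a *\<^sub>R (F (y + h) - F y)"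
    by (simp add: algebra_simps)
  finally show ?thesis .
qed

lemma convex_lip:
  fixes F :: "'a::banach_lattice \<Rightarrow> 'a"
  assumes cv: "convex_op F" and r: "r > 0"
    and bd: "\<And>x. norm (x - x0) \<le> 3*r \<Longrightarrow> norm (F x) \<le> M"
    and y: "norm (y - x0) \<le> r" and z: "norm (z - x0) \<le> r"
  shows "norm (F y - F z) \<le> (2*M/r) * norm (y - z)"
proof (cases "y = z")
  case True
  then show ?thesis by simp
next
  case False
  define d where "d = norm (z - y)"
  have dpos: "d > 0" using False by (simp add: d_def)
  have "z - y = (z - x0) - (y - x0)" by simp
  then have "d \<le> norm (z - x0) + norm (y - x0)" unfolding d_def
    using norm_triangle_ineq4[of "z - x0" "y - x0"] by simp
  then have d2r: "d \<le> 2*r" using y z by simp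
  define a where "a = d / (2*r)"
  have a0: "0 < a" and a1: "a \<le> 1" using dpos d2r r by (auto simp: a_def)
  define h where "h = (1/a) *\<^sub>R (z - y)"
  have hz: "a *\<^sub>R h = z - y" using a0 by (simp add: h_def)
  have nh: "norm h = 2*r" using a0 dpos r by (simp add: h_def a_def d_def)
  have b1: "norm (F (y + h)) \<le> M"
  proof (rule bd)
    have e: "y + h - x0 = (y - x0) + h" by simp
    have "norm (y + h - x0) \<le> norm (y - x0) + norm h"
      unfolding e by (rule norm_triangle_ineq)
    then show "norm (y + h - x0) \<le> 3*r" using nh y by simp
  qed
  have b2: "norm (F (z - h)) \<le> M"
  proof (rule bd)
    have e: "z - h - x0 = (z - x0) - h" by simp
    have "norm (z - h - x0) \<le> norm (z - x0) + norm h"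
      unfolding e by (rule norm_triangle_ineq4)
    then show "norm (z - h - x0) \<le> 3*r" using nh z by simp
  qed
  have up: "F z - F y \<le> a *\<^sub>R (F (y + h) - F y)"
    using convex_half_step[OF cv a0 a1, of y h] hz by simp
  have "F y - F z \<le> a *\<^sub>R (F (z + (- h)) - F z)"
    using convex_half_step[OF cv a0 a1, of z "-h"] hz by simp
  then have lo: "- (a *\<^sub>R (F (z - h) - F z)) \<le> F z - F y"
    using bl_neg_mono by fastforce
  have "norm (F z - F y) \<le> norm (- (a *\<^sub>R (F (z - h) - F z))) + norm (a *\<^sub>R (F (y + h) - F y))"
    by (rule bl_sandwich[OF lo up])
  also have "\<dots> = a * norm (F (z - h) - F z) + a * norm (F (y + h) - F y)"
    using a0 by simp
  also have "\<dots> \<le> a * (2*M) + a * (2*M)"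
  proof -
    have "norm (F (z - h) - F z) \<le> 2*M"
      using norm_triangle_ineq4[of "F (z - h)" "F z"] b2 bd[of z] z r by linarith
    moreover have "norm (F (y + h) - F y) \<le> 2*M"
      using norm_triangle_ineq4[of "F (y + h)" "F y"] b1 bd[of y] y r by linarith
    ultimately show ?thesis using a0 by (intro add_mono mult_left_mono) auto
  qed
  also have "\<dots> = (2*M/r) * norm (y - z)"
    using r by (simp add: a_def d_def norm_minus_commute field_simps)
  finally show ?thesis by (simp add: norm_minus_commute)
qed


lemma convex_bounded_cont:
  fixes F :: "'a::banach_lattice \<Rightarrow> 'a"
  assumes cv: "convex_op F" and bo: "bounded_op F"
  shows "continuous_on UNIV F"
proof (rule continuous_at_imp_continuous_on, intro ballI)
  fix x0 :: 'a
  obtain M where M: "\<And>x. norm x \<le> norm x0 + 3 \<Longrightarrow> norm (F x) \<le> M"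
  proof -
    have "norm x0 + 3 > 0" by (simp add: add_nonneg_pos)
    then show ?thesis using bo that unfolding bounded_op_def by blast
  qed
  have bd: "norm (F x) \<le> M" if "norm (x - x0) \<le> 3*1" for x
  proof (rule M)
    have "norm x \<le> norm (x - x0) + norm x0" using norm_triangle_ineq[of "x - x0" x0] by simp
    then show "norm x \<le> norm x0 + 3" using that by simp
  qed
  have lip: "norm (F y - F x0) \<le> (2*M/1) * norm (y - x0)" if "norm (y - x0) \<le> 1" for y
    by (rule convex_lip[OF cv _ bd]) (use that in auto)
  have "norm (F x0) \<le> M" using bd[of x0] by simp
  then have M0: "0 \<le> M" using norm_ge_zero order_trans by blast
  show "isCont F x0"
    unfolding continuous_at_eps_delta
  proof (intro allI impI)
    fix e :: real assume e: "e > 0"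
    define d where "d = min 1 (e / (2*M + 1))"
    have d: "d > 0" using e M0 by (simp add: d_def)
    show "\<exists>d>0. \<forall>y. dist y x0 < d \<longrightarrow> dist (F y) (F x0) < e"
    proof (intro exI conjI allI impI)
      fix y assume y: "dist y x0 < d"
      have n1: "norm (y - x0) \<le> 1" using y by (simp add: dist_norm d_def)
      have n2: "norm (y - x0) < e / (2*M + 1)" using y by (simp add: dist_norm d_def)
      have "dist (F y) (F x0) \<le> (2*M) * norm (y - x0)" using lip[OF n1] by (simp add: dist_norm)
      also have "\<dots> \<le> (2*M + 1) * norm (y - x0)" by (simp add: mult_right_mono)
      also have "\<dots> < (2*M+1) * (e / (2*M + 1))" using n2 M0 by (intro mult_strict_left_mono) auto
      also have "\<dots> = e" using M0 by simp
      finally show "dist (F y) (F x0) < e" .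
    qed (rule d)
  qed
qed

lemma pw_bound:
  fixes S :: "real \<Rightarrow> 'a::banach_lattice \<Rightarrow> 'a"
  assumes sg: "convex_C0_semigroup S"
  shows "\<exists>P. \<forall>t\<in>{0..T}. norm (S t x) \<le> P"
proof -
  from sg have bo: "\<And>t. t \<ge> 0 \<Longrightarrow> bounded_op (S t)"
    and S0: "S 0 = id" and semi: "\<And>s t. s \<ge> 0 \<Longrightarrow> t \<ge> 0 \<Longrightarrow> S (t + s) = S t \<circ> S s"
    and lim: "((\<lambda>t. S t x) \<longlongrightarrow> x) (at_right 0)"
    unfolding convex_C0_semigroup_def by auto
  have "eventually (\<lambda>t. dist (S t x) x < 1) (at_right 0)"
    using lim by (rule tendstoD) simp
  then obtain b where b: "b > 0" and bb: "\<And>t. t > 0 \<Longrightarrow> t < b \<Longrightarrow> dist (S t x) x < 1"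
    unfolding eventually_at_right_field by auto
  define \<delta> where "\<delta> = b / 2"
  have dpos: "\<delta> > 0" using b by (simp add: \<delta>_def)
  have hb: "norm (S h x) \<le> norm x + 1" if "0 \<le> h" "h < \<delta>" for h
  proof (cases "h = 0")
    case True then show ?thesis using S0 by simp
  next
    case False
    then have "dist (S h x) x < 1" using that by (intro bb) (auto simp: \<delta>_def)
    then show ?thesis using norm_triangle_ineq[of "S h x - x" x] by (simp add: dist_norm)
  qed
  have "\<forall>k::nat. \<exists>M. \<forall>y. norm y \<le> norm x + 1 \<longrightarrow> norm (S (real k * \<delta>) y) \<le> M"
  proof
    fix k :: nat
    have "real k * \<delta> \<ge> 0" using dpos by simp
    moreover have "norm x + 1 > 0" by (simp add: add_nonneg_pos)
    ultimately show "\<exists>M. \<forall>y. norm y \<le> norm x + 1 \<longrightarrow> norm (S (real k * \<delta>) y) \<le> M"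
      using bo unfolding bounded_op_def by blast
  qed
  then obtain Mf where Mf: "\<And>k y. norm y \<le> norm x + 1 \<Longrightarrow> norm (S (real k * \<delta>) y) \<le> Mf k"
    by metis
  define N where "N = nat \<lceil>T / \<delta>\<rceil>"
  show ?thesis
  proof (intro exI ballI)
    fix t assume t: "t \<in> {0..T}"
    define k where "k = nat \<lfloor>t / \<delta>\<rfloor>"
    have tk: "real k = of_int \<lfloor>t / \<delta>\<rfloor>" using t dpos by (simp add: k_def)
    have f1: "of_int \<lfloor>t / \<delta>\<rfloor> \<le> t / \<delta>" "t / \<delta> < of_int \<lfloor>t / \<delta>\<rfloor> + 1"
      by linarith+
    have "real k * \<delta> \<le> (t / \<delta>) * \<delta>" using f1(1) tk dpos by (intro mult_right_mono) auto
    then have kd1: "real k * \<delta> \<le> t" using dpos by simp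
    have "(t / \<delta>) * \<delta> < (real k + 1) * \<delta>" using f1(2) tk dpos by (intro mult_strict_right_mono) auto
    then have kd2: "t < real k * \<delta> + \<delta>" using dpos by (simp add: algebra_simps)
    define h where "h = t - real k * \<delta>"
    have h0: "0 \<le> h" "h < \<delta>" using kd1 kd2 by (auto simp: h_def)
    have "t / \<delta> \<le> T / \<delta>" using t dpos by (simp add: divide_right_mono)
    then have "\<lfloor>t / \<delta>\<rfloor> \<le> \<lfloor>T / \<delta>\<rfloor>" by (rule floor_mono)
    also have "\<dots> \<le> \<lceil>T / \<delta>\<rceil>" by (rule floor_le_ceiling)
    finally have kN: "k \<le> N" unfolding k_def N_def by (rule nat_mono)
    have "S t x = S (real k * \<delta> + h) x" by (simp add: h_def)
    also have "\<dots> = S (real k * \<delta>) (S h x)" using semi[of h "real k * \<delta>"] h0 dpos by simp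
    finally have "norm (S t x) \<le> Mf k" using Mf[OF hb[OF h0]] by simp
    also have "\<dots> \<le> \<bar>Mf k\<bar>" by simp
    also have "\<dots> \<le> (\<Sum>j\<le>N. \<bar>Mf j\<bar>)" by (rule member_le_sum) (use kN in auto)
    finally show "norm (S t x) \<le> (\<Sum>j\<le>N. \<bar>Mf j\<bar>)" .
  qed
qed


lemma unif_ball:
  fixes S :: "real \<Rightarrow> 'a::banach_lattice \<Rightarrow> 'a"
  assumes sg: "convex_C0_semigroup S"
  shows "\<exists>x1 \<epsilon> n. \<epsilon> > 0 \<and> (\<forall>y. norm (y - x1) \<le> \<epsilon> \<longrightarrow> (\<forall>t\<in>{0..T}. norm (S t y) \<le> real (n::nat)))"
proof -
  define C where "C n = {x. \<forall>t\<in>{0..T}. norm (S t x) \<le> real n}" for n :: nat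
  have cont: "continuous_on UNIV (S t)" if "t \<ge> 0" for t
    using sg that unfolding convex_C0_semigroup_def by (auto intro: convex_bounded_cont)
  have clo: "closed (C n)" for n
  proof -
    have "C n = (\<Inter>t\<in>{0..T}. {x. norm (S t x) \<le> real n})" by (auto simp: C_def)
    moreover have "closed {x. norm (S t x) \<le> real n}" if "t \<in> {0..T}" for t
      using that by (intro closed_Collect_le continuous_on_norm cont continuous_on_const) auto
    ultimately show ?thesis by auto
  qed
  have un: "\<Union>(range C) = UNIV"
  proof (intro set_eqI iffI)
    fix x :: 'a
    obtain P where P: "\<forall>t\<in>{0..T}. norm (S t x) \<le> P" using pw_bound[OF sg] by blast
    have "P \<le> real (nat \<lceil>P\<rceil>)" by (rule real_nat_ceiling_ge)
    then have "x \<in> C (nat \<lceil>P\<rceil>)" using P unfolding C_def by (auto intro: order_trans)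
    then show "x \<in> \<Union>(range C)" by blast
  qed auto
  have "\<exists>n. interior (C n) \<noteq> {}"
  proof (rule ccontr)
    assume "\<not> ?thesis"
    then have "euclidean interior_of \<Union>(range C) = {}"
      by (intro Baire_category_alt) (auto simp: completely_metrizable_space_euclidean clo simp flip: closed_closedin)
    then show False using un by simp
  qed
  then obtain n x1 where "x1 \<in> interior (C n)" by blast
  then obtain \<epsilon> where e: "\<epsilon> > 0" "cball x1 \<epsilon> \<subseteq> C n" unfolding mem_interior_cball by blast
  show ?thesis
  proof (intro exI conjI allI impI)
    fix y assume "norm (y - x1) \<le> \<epsilon>"
    then have "y \<in> C n" using e(2) by (auto simp: dist_norm norm_minus_commute)
    then show "\<forall>t\<in>{0..T}. norm (S t y) \<le> real n" by (simp add: C_def)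
  qed (rule e(1))
qed


lemma convex_mid:
  fixes F :: "'a::banach_lattice \<Rightarrow> 'a"
  assumes "convex_op F"
  shows "F ((1/2) *\<^sub>R u + (1/2) *\<^sub>R v) \<le> (1/2) *\<^sub>R F u + (1/2) *\<^sub>R F v"
proof -
  have "F ((1/2) *\<^sub>R u + (1 - 1/2) *\<^sub>R v) \<le> (1/2) *\<^sub>R F u + (1 - 1/2) *\<^sub>R F v"
    using assms unfolding convex_op_def by (erule_tac x=u in allE, erule_tac x=v in allE, erule_tac x="1/2" in allE) simp
  moreover have "(1::real) - 1/2 = 1/2" by simp
  ultimately show ?thesis by simp
qed

lemma local_bound:
  fixes S :: "real \<Rightarrow> 'a::banach_lattice \<Rightarrow> 'a"
  assumes sg: "convex_C0_semigroup S"
  shows "\<exists>\<rho>>0. \<exists>M. \<forall>y. norm (y - x0) \<le> \<rho> \<longrightarrow> (\<forall>t\<in>{0..T}. norm (S t y) \<le> M)"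
proof -
  obtain x1 \<epsilon> n where e: "\<epsilon> > 0" and B: "\<And>y t. norm (y - x1) \<le> \<epsilon> \<Longrightarrow> t \<in> {0..T} \<Longrightarrow> norm (S t y) \<le> real (n::nat)"
    using unif_ball[OF sg, of T] by blast
  define p where "p = 2 *\<^sub>R x0 - x1"
  obtain P0 where P0: "\<And>t. t \<in> {0..T} \<Longrightarrow> norm (S t x0) \<le> P0" using pw_bound[OF sg, of T x0] by blast
  obtain Pp where Pp: "\<And>t. t \<in> {0..T} \<Longrightarrow> norm (S t p) \<le> Pp" using pw_bound[OF sg, of T p] by blast
  show ?thesis
  proof (intro exI conjI allI impI ballI)
    show "\<epsilon>/2 > 0" using e by simp
    fix y t assume y: "norm (y - x0) \<le> \<epsilon>/2" and t: "t \<in> {0..T}"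
    have cv: "convex_op (S t)" using sg t unfolding convex_C0_semigroup_def by auto
    define F where "F = S t"
    define b where "b = 2 *\<^sub>R y - p"
    define q where "q = 2 *\<^sub>R x0 - y"
    define b' where "b' = 2 *\<^sub>R q - p"
    have yb: "y = (1/2) *\<^sub>R p + (1/2) *\<^sub>R b" by (simp add: b_def algebra_simps)
    have qb: "q = (1/2) *\<^sub>R p + (1/2) *\<^sub>R b'" by (simp add: b'_def algebra_simps)
    have xq: "x0 = (1/2) *\<^sub>R y + (1/2) *\<^sub>R q" by (simp add: q_def algebra_simps)
    have nb: "norm (b - x1) \<le> \<epsilon>"
    proof -
      have "b - x1 = 2 *\<^sub>R (y - x0)" by (simp add: b_def p_def algebra_simps)
      then show ?thesis using y by simp
    qed
    have nb': "norm (b' - x1) \<le> \<epsilon>"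
    proof -
      have four: "(4::real) *\<^sub>R x0 = 2 *\<^sub>R x0 + 2 *\<^sub>R x0"
        using scaleR_add_left[of 2 2 x0] by simp
      have "b' - x1 = - (2 *\<^sub>R (y - x0))" by (simp add: b'_def q_def p_def algebra_simps four)
      then show ?thesis using y by (simp only: norm_minus_cancel) simp
    qed
    define w where "w = (1/2) *\<^sub>R F p + (1/2) *\<^sub>R F b"
    define w' where "w' = (1/2) *\<^sub>R F p + (1/2) *\<^sub>R F b'"
    define u where "u = 2 *\<^sub>R F x0 - w'"
    have up: "F y \<le> w" unfolding w_def F_def using convex_mid[OF cv, of p b] yb by simp
    have uq: "F q \<le> w'" unfolding w'_def F_def using convex_mid[OF cv, of p b'] qb by simp
    have ux: "F x0 \<le> (1/2) *\<^sub>R F y + (1/2) *\<^sub>R F q" unfolding F_def using convex_mid[OF cv, of y q] xq by simp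
    then have "2 *\<^sub>R F x0 \<le> 2 *\<^sub>R ((1/2) *\<^sub>R F y + (1/2) *\<^sub>R F q)" by (rule scaleR_mono_bl) simp
    then have "2 *\<^sub>R F x0 \<le> F y + F q" by (simp add: scaleR_right_distrib)
    then have "2 *\<^sub>R F x0 - F q \<le> F y + F q - F q" by (rule bl_sub_mono)
    then have l1: "2 *\<^sub>R F x0 - F q \<le> F y" by simp
    have "2 *\<^sub>R F x0 + - w' \<le> 2 *\<^sub>R F x0 + - F q" by (rule bl_add_mono_r) (rule bl_neg_mono[OF uq])
    then have lo: "u \<le> F y" using l1 unfolding u_def by (simp add: order_trans)
    have "norm (F y) \<le> norm u + norm w" by (rule bl_sandwich[OF lo up])
    also have "\<dots> \<le> (2 * P0 + ((1/2) * Pp + (1/2) * real n)) + ((1/2) * Pp + (1/2) * real n)"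
    proof (intro add_mono)
      have "norm (F p) \<le> Pp" "norm (F b) \<le> real n" "norm (F b') \<le> real n" "norm (F x0) \<le> P0"
        using Pp[OF t] B[OF nb t] B[OF nb' t] P0[OF t] by (simp_all add: F_def)
      then show "norm w \<le> (1/2) * Pp + (1/2) * real n"
        "norm u \<le> 2 * P0 + ((1/2) * Pp + (1/2) * real n)"
        unfolding w_def u_def w'_def
        using norm_triangle_ineq[of "(1/2) *\<^sub>R F p" "(1/2) *\<^sub>R F b"]
          norm_triangle_ineq[of "(1/2) *\<^sub>R F p" "(1/2) *\<^sub>R F b'"]
          norm_triangle_ineq4[of "2 *\<^sub>R F x0" "(1/2) *\<^sub>R F p + (1/2) *\<^sub>R F b'"]
        by simp_all
    qed
    finally show "norm (S t y) \<le> 2 * P0 + Pp + real n" by (simp add: F_def)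
  qed
qed

theorem corollary2p4:
  fixes S :: "real \<Rightarrow> 'a::banach_lattice \<Rightarrow> 'a" and T :: real and x0 :: 'a
  assumes "convex_C0_semigroup S" and "T > 0"
  shows "\<exists>L\<ge>0. \<exists>r>0. \<forall>y z. norm (y - x0) \<le> r \<and> norm (z - x0) \<le> r \<longrightarrow>
           (\<forall>t\<in>{0..T}. norm (S t y - S t z) \<le> L * norm (y - z))"
proof -
  obtain \<rho> M where rho: "\<rho> > 0" and M: "\<And>y t. norm (y - x0) \<le> \<rho> \<Longrightarrow> t \<in> {0..T} \<Longrightarrow> norm (S t y) \<le> M"
    using local_bound[OF assms(1), of x0 T] by blast
  have "norm (S 0 x0) \<le> M" using M[of x0 0] rho assms(2) by simp
  then have M0: "0 \<le> M" using norm_ge_zero order_trans by blast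
  define r where "r = \<rho> / 3"
  have r: "r > 0" using rho by (simp add: r_def)
  show ?thesis
  proof (intro exI conjI allI impI ballI)
    show "2 * M / r \<ge> 0" using M0 r by simp
    show "r > 0" by (rule r)
    fix y z t assume yz: "norm (y - x0) \<le> r \<and> norm (z - x0) \<le> r" and t: "t \<in> {0..T}"
    have cv: "convex_op (S t)" using assms(1) t unfolding convex_C0_semigroup_def by auto
    show "norm (S t y - S t z) \<le> 2 * M / r * norm (y - z)"
      by (rule convex_lip[OF cv r, of x0 M]) (use M t yz in \<open>auto simp: r_def\<close>)
  qed
qed

end
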